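(* Let $\beta_1\in(0,1)$, $\beta_0=1-\beta_1$, $\rho\in(0,1)$, $\theta\in(0,1)$, $\lambda\ge 0$, $N_0>0$, and assume $$N_0\le \frac{\lambda(1-\rho)(1-\beta_1\theta)^2}{\rho\,\theta^2}.$$ For $s\in[0,1]$ let $$\bar m_1(s)=\tfrac{\beta_0\beta_1(1-\rho)s}{\rho+\beta_1 s(1-\rho)},\ \bar m_2(s)=\tfrac{\beta_0\rho}{\rho+\beta_1 s(1-\rho)},\ \bar m_3(s)=\tfrac{\beta_1^2(1-\rho)s}{\rho+\beta_1 s(1-\rho)},\ \bar m_4(s)=\tfrac{\beta_1\rho}{\rho+\beta_1 s(1-\rho)},$$ $$E(s)=\frac{\theta N_0\, s}{1-\theta \bar m_4(s)}+\lambda\big(\bar m_2(s)+\bar m_4(s)\big),$$ and define $$N_0^0=\frac{\lambda\beta_1(1-\rho)(1-\theta\beta_1)}{\rho\theta},\qquad N_0^1=\frac{\lambda\beta_1(1-\rho)\rho\,\dfrac{(\rho+\beta_1-\beta_1\rho(1+\theta))^2}{(\beta_1+\rho-\beta_1\rho)^2}}{\theta\big(2\beta_1(1-\rho)\rho(1-\theta\beta_1)+\rho^2(1-\theta\beta_1)+\beta_1^2(1-\rho)^2\big)}.$$ Let $s_4^*$ denote the optimal equilibrium control, i.e. a minimizer of $E$ over $[0,1]$, and $\vec m^*=(\bar m_1(s_4^* ),\dots,\bar m_4(s_4^* ))$. Then: (i) if $N_0\ge N_0^0$, then $s_4^*=0$ and $\vec m^*=(0,\beta_0,0,\beta_1)$;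 (ii) if $N_0\le N_0^1$, then $s_4^*=1$ and $$m_1^*=\tfrac{\beta_0\beta_1(1-\rho)}{\beta_1(1-\rho)+\rho},\ m_2^*=\tfrac{\beta_0\rho}{\rho+\beta_1(1-\rho)},\ m_3^*=\tfrac{\beta_1^2(1-\rho)}{\rho+\beta_1(1-\rho)},\ m_4^*=\tfrac{\beta_1\rho}{\rho+\beta_1(1-\rho)};$$ (iii) if $N_0^1<N_0<N_0^0$, then $s_4^*\in(0,1)$, and with $m_4^*=\bar m_4(s_4^* )$, $$N_0=\frac{\lambda(1-\rho)(m_4^* )^2(1-\theta m_4^* )^2}{\theta\rho\big(\theta m_4^*(m_4^*-2\beta_1)+\beta_1\big)}.$$
   Context: Mean-field model of a dense wireless network with two channel states (BAD with probability $\beta_0$, GOOD with probability $\beta_1$, i.i.d. over slots), packet arrival probability $\rho$ per slot, buffer size one, SINR decoding threshold $\theta<1$, noise power $N_0$, and weight $\lambda$ on queue length. The population is described by the fractions $m_1,\dots,m_4$ of users in states (BAD, empty), (BAD, one packet), (GOOD, empty), (GOOD, one packet). Only users in state (GOOD, one packet) may be scheduled; $s\in[0,1]$ is the fraction of them that transmit. For a constant control $s$, $(\bar m_1(s),\dots,\bar m_4(s))$ is the equilibrium of the fluid dynamics and $E(s)$ the equilibrium average cost. *)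

theory Defs
  imports Complex_Main
begin

definition denom :: "real \<Rightarrow> real \<Rightarrow> real \<Rightarrow> real" where
  "denom b1 rho s = rho + b1 * s * (1 - rho)"

definition mbar1 :: "real \<Rightarrow> real \<Rightarrow> real \<Rightarrow> real" where
  "mbar1 b1 rho s = (1 - b1) * b1 * (1 - rho) * s / denom b1 rho s"

definition mbar2 :: "real \<Rightarrow> real \<Rightarrow> real \<Rightarrow> real" where
  "mbar2 b1 rho s = (1 - b1) * rho / denom b1 rho s"

definition mbar3 :: "real \<Rightarrow> real \<Rightarrow> real \<Rightarrow> real" where
  "mbar3 b1 rho s = b1\<^sup>2 * (1 - rho) * s / denom b1 rho s"

definition mbar4 :: "real \<Rightarrow> real \<Rightarrow> real \<Rightarrow> real" where
  "mbar4 b1 rho s = b1 * rho / denom b1 rho s"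

definition Ecost :: "real \<Rightarrow> real \<Rightarrow> real \<Rightarrow> real \<Rightarrow> real \<Rightarrow> real \<Rightarrow> real" where
  "Ecost b1 rho theta lam N0 s =
     theta * N0 * s / (1 - theta * mbar4 b1 rho s) + lam * (mbar2 b1 rho s + mbar4 b1 rho s)"

definition N0_0 :: "real \<Rightarrow> real \<Rightarrow> real \<Rightarrow> real \<Rightarrow> real" where
  "N0_0 b1 rho theta lam = lam * b1 * (1 - rho) * (1 - theta * b1) / (rho * theta)"

definition N0_1 :: "real \<Rightarrow> real \<Rightarrow> real \<Rightarrow> real \<Rightarrow> real" where
  "N0_1 b1 rho theta lam =
     (lam * b1 * (1 - rho) * rho *
        ((rho + b1 - b1 * rho * (1 + theta))\<^sup>2 / (b1 + rho - b1 * rho)\<^sup>2))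
     / (theta * (2 * b1 * (1 - rho) * rho * (1 - theta * b1) + rho\<^sup>2 * (1 - theta * b1)
                 + b1\<^sup>2 * (1 - rho)\<^sup>2))"

end

theory Submission imports Defs begin

lemma core:
  fixes x k :: real
  assumes k0: "0<k" and k1: "k<1" and kx: "k \<le> x"
    and A: "(1-k)*x\<^sup>2 \<le> k\<^sup>2*(x+(1-k))\<^sup>2*(x\<^sup>2+(1-k)*k)"
  shows "(1-k)\<^sup>2*k \<le> x^3"
proof (rule ccontr)
  define w where "w = 1-k"
  have w0: "0 < w" using k1 by (simp add: w_def)
  assume "\<not> (1-k)\<^sup>2*k \<le> x^3"
  hence h: "x^3 < w\<^sup>2*k" by (simp add: w_def)
  have x0: "0 < x" using k0 kx by linarith
  have xw: "x < w"
  proof (rule ccontr)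
    assume "\<not> x < w" hence "w \<le> x" by simp
    hence "w\<^sup>2 \<le> x\<^sup>2" using w0 by (simp add: power_mono)
    hence "w\<^sup>2 * x \<le> x\<^sup>2 * x" using x0 by (simp add: mult_right_mono)
    moreover have "w\<^sup>2 * k \<le> w\<^sup>2 * x" using kx by (simp add: mult_left_mono)
    ultimately show False using h by (simp add: power3_eq_cube power2_eq_square algebra_simps)
  qed
  define u where "u = x/(x+w)"
  have xw0: "0 < x+w" using x0 w0 by simp
  have u0: "0 < u" using x0 xw0 by (simp add: u_def)
  have u2: "u < 1/2" using xw xw0 by (simp add: u_def field_simps)
  have ku: "k \<le> u"
  proof -
    have "0 \<le> (x-k)*(1-k)" using kx k1 by simp
    hence "k*(x+w) \<le> x" by (simp add: w_def algebra_simps)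
    thus ?thesis using xw0 by (simp add: u_def field_simps)
  qed
  have id1: "u\<^sup>2*(1-u)\<^sup>2 - k\<^sup>2*(u\<^sup>2-2*u*k+k) = u\<^sup>2*(1-u)*(1-2*u)+(u-k)*((1-2*u)*k\<^sup>2+u*(1-u)*k+u\<^sup>2*(1-u))"
    by (simp add: algebra_simps power2_eq_square)
  have pos: "0 < u\<^sup>2*(1-u)*(1-2*u)+(u-k)*((1-2*u)*k\<^sup>2+u*(1-u)*k+u\<^sup>2*(1-u))"
  proof -
    have "0 < u\<^sup>2*(1-u)*(1-2*u)" using u0 u2 by simp
    moreover have "0 \<le> (u-k)*((1-2*u)*k\<^sup>2+u*(1-u)*k+u\<^sup>2*(1-u))"
      using ku u0 u2 k0 by (intro mult_nonneg_nonneg add_nonneg_nonneg) auto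
    ultimately show ?thesis by linarith
  qed
  have kw: "k = 1-w" by (simp add: w_def)
  have ux: "u*(x+w) = x" unfolding u_def using xw0 by simp
  have e1: "u\<^sup>2*(1-u)\<^sup>2*(x+w)^4 = (u*(x+w))\<^sup>2*((x+w) - u*(x+w))\<^sup>2"
    by (simp add: algebra_simps power2_eq_square power4_eq_xxxx)
  have e2: "k\<^sup>2*(u\<^sup>2-2*u*k+k)*(x+w)^4 = k\<^sup>2*((u*(x+w))\<^sup>2 - 2*k*(u*(x+w))*(x+w) + k*(x+w)\<^sup>2)*(x+w)\<^sup>2"
    by (simp add: algebra_simps power2_eq_square power4_eq_xxxx)
  have e3: "x\<^sup>2 - 2*k*x*(x+w) + k*(x+w)\<^sup>2 = w*(x\<^sup>2+w*k)"
    unfolding kw by (simp add: algebra_simps power2_eq_square)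
  have "(u\<^sup>2*(1-u)\<^sup>2 - k\<^sup>2*(u\<^sup>2-2*u*k+k))*(x+w)^4 = w*(w*x\<^sup>2 - k\<^sup>2*(x+w)\<^sup>2*(x\<^sup>2+w*k))"
  proof -
    have "(u\<^sup>2*(1-u)\<^sup>2 - k\<^sup>2*(u\<^sup>2-2*u*k+k))*(x+w)^4 = x\<^sup>2*w\<^sup>2 - k\<^sup>2*(w*(x\<^sup>2+w*k))*(x+w)\<^sup>2"
      using e1 e2 e3 ux by (simp add: left_diff_distrib)
    thus ?thesis by (simp add: algebra_simps power2_eq_square)
  qed
  hence id2: "u\<^sup>2*(1-u)\<^sup>2 - k\<^sup>2*(u\<^sup>2-2*u*k+k) = w*(w*x\<^sup>2 - k\<^sup>2*(x+w)\<^sup>2*(x\<^sup>2+w*k))/(x+w)^4"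
    using xw0 by (simp add: eq_divide_eq)
  have "0 < w*x\<^sup>2 - k\<^sup>2*(x+w)\<^sup>2*(x\<^sup>2+w*k)"
  proof -
    have "0 < w*(w*x\<^sup>2 - k\<^sup>2*(x+w)\<^sup>2*(x\<^sup>2+w*k))/(x+w)^4" using id1 id2 pos by simp
    thus ?thesis using w0 xw0 by (simp add: zero_less_divide_iff zero_less_mult_iff)
  qed
  thus False using A by (simp add: w_def algebra_simps)
qed


definition SS :: "real \<Rightarrow> real \<Rightarrow> real \<Rightarrow> real \<Rightarrow> real \<Rightarrow> real" where
  "SS b1 rho theta lam d = b1*(1-rho)*lam*rho*(d - theta*b1*rho)\<^sup>2
     / (theta*d\<^sup>2*(d\<^sup>2 - 2*(theta*b1*rho)*d + (theta*b1*rho)*rho))"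

definition SS' :: "real \<Rightarrow> real \<Rightarrow> real \<Rightarrow> real \<Rightarrow> real \<Rightarrow> real" where
  "SS' b1 rho theta lam d = 2*(b1*(1-rho))*lam*rho/theta*(d - theta*b1*rho)
     *((theta*b1*rho)\<^sup>2*(rho - theta*b1*rho) - (d - theta*b1*rho)^3)
     / (d^3*(d\<^sup>2 - 2*(theta*b1*rho)*d + (theta*b1*rho)*rho)\<^sup>2)"

context
  fixes b1 rho theta lam :: real
  assumes b0: "0 < b1" and b1: "b1 < 1" and r0: "0 < rho" and r1: "rho < 1"
    and t0: "0 < theta" and t1: "theta < 1" and l0: "0 < lam"
begin

lemma c_pos: "0 < theta*b1*rho" using b0 r0 t0 by simp
lemma c_lt: "theta*b1*rho < rho"
proof -
  have "theta*b1 < 1" using b0 b1 t0 t1 by (metis mult_strict_mono' less_eq_real_def mult_1 )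
  thus ?thesis using r0 by simp
qed
lemma tb1: "theta*b1 < 1" using c_lt r0 by simp

lemma Q_pos: "0 < d\<^sup>2 - 2*(theta*b1*rho)*d + (theta*b1*rho)*rho"
proof -
  have "d\<^sup>2 - 2*(theta*b1*rho)*d + (theta*b1*rho)*rho = (d - theta*b1*rho)\<^sup>2 + (theta*b1*rho)*(rho - theta*b1*rho)"
    by (simp add: algebra_simps power2_eq_square)
  moreover have "0 < (theta*b1*rho)*(rho - theta*b1*rho)" using c_pos c_lt by simp
  ultimately show ?thesis by (smt (verit) zero_le_power2)
qed

lemma SS_deriv:
  assumes "theta*b1*rho < d"
  shows "((SS b1 rho theta lam) has_real_derivative SS' b1 rho theta lam d) (at d)"
proof -
  define c where "c = theta*b1*rho"
  define K where "K = b1*(1-rho)*lam*rho"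
  have d0: "0 < d" using assms c_pos by linarith
  have Q: "d\<^sup>2 - 2*c*d + c*rho > 0" using Q_pos[of d] by (simp add: c_def)
  have f: "((\<lambda>y. K*(y-c)\<^sup>2) has_real_derivative K*(2*(d-c))) (at d)"
    by (auto intro!: derivative_eq_intros)
  have g: "((\<lambda>y. theta*y\<^sup>2*(y\<^sup>2 - 2*c*y + c*rho)) has_real_derivative
            theta*(2*d*(d\<^sup>2 - 2*c*d + c*rho) + d\<^sup>2*(2*d - 2*c))) (at d)"
    by (auto intro!: derivative_eq_intros simp: algebra_simps power2_eq_square power3_eq_cube)
  have gn: "theta*d\<^sup>2*(d\<^sup>2 - 2*c*d + c*rho) \<noteq> 0" using d0 Q t0 by simp
  have D: "((\<lambda>y. K*(y-c)\<^sup>2 / (theta*y\<^sup>2*(y\<^sup>2 - 2*c*y + c*rho))) has_real_derivative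
     (K*(2*(d-c)) * (theta*d\<^sup>2*(d\<^sup>2 - 2*c*d + c*rho)) - (theta*(2*d*(d\<^sup>2 - 2*c*d + c*rho) + d\<^sup>2*(2*d - 2*c))) * (K*(d-c)\<^sup>2))
       / (theta*d\<^sup>2*(d\<^sup>2 - 2*c*d + c*rho)) ^ Suc (Suc 0)) (at d)"
    by (rule DERIV_quotient[OF f g gn])
  have eq: "(K*(2*(d-c)) * (theta*d\<^sup>2*(d\<^sup>2 - 2*c*d + c*rho)) - (theta*(2*d*(d\<^sup>2 - 2*c*d + c*rho) + d\<^sup>2*(2*d - 2*c))) * (K*(d-c)\<^sup>2))
       / (theta*d\<^sup>2*(d\<^sup>2 - 2*c*d + c*rho)) ^ Suc (Suc 0)
     = 2*K/theta*(d-c)*(c\<^sup>2*(rho-c) - (d-c)^3)/(d^3*(d\<^sup>2 - 2*c*d + c*rho)\<^sup>2)"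
  proof -
    have num: "K*(2*(d-c)) * (theta*d\<^sup>2*(d\<^sup>2 - 2*c*d + c*rho)) - (theta*(2*d*(d\<^sup>2 - 2*c*d + c*rho) + d\<^sup>2*(2*d - 2*c))) * (K*(d-c)\<^sup>2)
       = theta*d*(2*K*(d-c)*(c\<^sup>2*(rho-c) - (d-c)^3))"
      by (simp add: algebra_simps power2_eq_square power3_eq_cube)
    have "d^3 = d*d\<^sup>2" by (simp add: power2_eq_square power3_eq_cube)
    thus ?thesis unfolding num using d0 Q t0
      by (simp add: power2_eq_square mult_ac)
  qed
  have D2: "((\<lambda>y. K*(y-c)\<^sup>2 / (theta*y\<^sup>2*(y\<^sup>2 - 2*c*y + c*rho))) has_real_derivative
      2*K/theta*(d-c)*(c\<^sup>2*(rho-c) - (d-c)^3)/(d^3*(d\<^sup>2 - 2*c*d + c*rho)\<^sup>2)) (at d)"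
    using D by (metis eq)
  have e1: "SS b1 rho theta lam = (\<lambda>y. K*(y-c)\<^sup>2 / (theta*y\<^sup>2*(y\<^sup>2 - 2*c*y + c*rho)))"
    by (rule ext) (simp add: SS_def c_def K_def)
  have e2: "SS' b1 rho theta lam d = 2*K/theta*(d-c)*(c\<^sup>2*(rho-c) - (d-c)^3)/(d^3*(d\<^sup>2 - 2*c*d + c*rho)\<^sup>2)"
    by (simp add: SS'_def c_def K_def)
  show ?thesis unfolding e1 e2 by (rule D2)
qed


lemma L_d:
  assumes rd: "rho \<le> d"
    and SH: "SS b1 rho theta lam d \<le> lam*(1-rho)*(1-b1*theta)\<^sup>2/(rho*theta\<^sup>2)"
  shows "(theta*b1*rho)\<^sup>2*(rho - theta*b1*rho) \<le> (d - theta*b1*rho)^3"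
proof -
  define w where "w = theta*b1"
  define k where "k = 1 - w"
  define x where "x = (d - rho*w)/rho"
  have w0: "0 < w" using b0 t0 by (simp add: w_def)
  have k0: "0 < k" using tb1 by (simp add: k_def w_def)
  have k1: "k < 1" using w0 by (simp add: k_def)
  have dx: "d - theta*b1*rho = rho*x" using r0 by (simp add: x_def w_def field_simps)
  have dd: "d = rho*(x+w)" using r0 by (simp add: x_def field_simps)
  have kx: "k \<le> x" using rd r0 by (simp add: x_def k_def field_simps)
  have x0: "0 < x" using kx k0 by simp
  have Qe: "d\<^sup>2 - 2*(theta*b1*rho)*d + (theta*b1*rho)*rho = rho\<^sup>2*(x\<^sup>2+w*k)"
    unfolding dd k_def w_def[symmetric] by (simp add: algebra_simps power2_eq_square w_def)
  have P: "0 < x\<^sup>2+w*k" using x0 w0 k0 by (simp add: add_pos_pos)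
  have xw: "0 < x + w" using x0 w0 by simp
  define Dn where "Dn = theta*(rho*(x+w))\<^sup>2*(rho\<^sup>2*(x\<^sup>2+w*k))"
  define N where "N = b1*(1-rho)*lam*rho*(rho*x)\<^sup>2"
  define H where "H = lam*(1-rho)*(1-b1*theta)\<^sup>2/(rho*theta\<^sup>2)"
  have Dn0: "0 < Dn" unfolding Dn_def using t0 r0 xw P by simp
  have SSe: "SS b1 rho theta lam d = N / Dn"
    unfolding SS_def dx Qe N_def Dn_def by (simp only: dd[symmetric])
  have "N \<le> H * Dn" using SH Dn0 unfolding SSe H_def[symmetric] by (simp add: pos_divide_le_eq)
  hence "theta*N \<le> theta*(H*Dn)" using t0 by simp
  moreover have "theta*N = (lam*(1-rho)*rho^3)*(w*x\<^sup>2)"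
    by (simp add: N_def w_def algebra_simps power2_eq_square power3_eq_cube)
  moreover have "theta*(H*Dn) = (lam*(1-rho)*rho^3)*(k\<^sup>2*((x+w)\<^sup>2*(x\<^sup>2+w*k)))"
    unfolding H_def Dn_def using t0 r0 by (simp add: k_def w_def field_simps power2_eq_square power3_eq_cube)
  moreover have pf: "0 < lam*(1-rho)*rho^3" using l0 r0 r1 by simp
  ultimately have A0: "w*x\<^sup>2 \<le> k\<^sup>2*((x+w)\<^sup>2*(x\<^sup>2+w*k))"
    using mult_le_cancel_left_pos by metis
  have wk: "w = 1 - k" by (simp add: k_def)
  have "(1-k)\<^sup>2*k \<le> x^3"
    by (rule core[OF k0 k1 kx]) (use A0 in \<open>simp add: wk mult.commute mult.left_commute\<close>)
  hence "rho^3*((1-k)\<^sup>2*k) \<le> rho^3*x^3" using r0 by simp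
  thus ?thesis unfolding dx using r0
    by (simp add: k_def w_def power2_eq_square power3_eq_cube algebra_simps)
qed

lemma SS_mono:
  assumes rd: "rho \<le> d0" and dd: "d0 < d1"
    and SH: "SS b1 rho theta lam d0 \<le> lam*(1-rho)*(1-b1*theta)\<^sup>2/(rho*theta\<^sup>2)"
  shows "SS b1 rho theta lam d1 < SS b1 rho theta lam d0"
proof -
  define c where "c = theta*b1*rho"
  have T0: "c\<^sup>2*(rho - c) \<le> (d0 - c)^3" using L_d[OF rd SH] by (simp add: c_def)
  have cd0: "c < d0" using c_lt rd by (simp add: c_def)
  obtain z where z: "d0 < z" "z < d1"
    and eq: "SS b1 rho theta lam d1 - SS b1 rho theta lam d0 = (d1 - d0) * SS' b1 rho theta lam z"
    using MVT2[OF dd, of "SS b1 rho theta lam" "SS' b1 rho theta lam"] SS_deriv cd0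
    unfolding c_def by (meson less_le_trans not_le)
  have "(d0 - c)^3 < (z - c)^3" using z cd0 by (simp add: power_strict_mono)
  hence T: "c\<^sup>2*(rho-c) - (z-c)^3 < 0" using T0 by simp
  have z0: "0 < z" using z cd0 c_pos c_def by simp
  have zc: "0 < z - c" using z cd0 by simp
  have Qz: "0 < z\<^sup>2 - 2*c*z + c*rho" using Q_pos[of z] by (simp add: c_def)
  have num: "2*(b1*(1-rho))*lam*rho/theta*(z-c) > 0" using b0 r0 r1 l0 t0 zc by simp
  have "SS' b1 rho theta lam z = (2*(b1*(1-rho))*lam*rho/theta*(z-c)) * (c\<^sup>2*(rho-c) - (z-c)^3) / (z^3*(z\<^sup>2 - 2*c*z + c*rho)\<^sup>2)"
    by (simp add: SS'_def c_def)
  also have "\<dots> < 0" using num T z0 Qz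
    by (intro divide_neg_pos mult_pos_neg) auto
  finally have "SS' b1 rho theta lam z < 0" .
  hence "(d1 - d0) * SS' b1 rho theta lam z < 0" using dd by (simp add: mult_pos_neg)
  thus ?thesis using eq by simp
qed


lemma E_deriv:
  assumes ds: "theta*b1*rho < rho + b1*(1-rho)*s"
  shows "((\<lambda>s. Ecost b1 rho theta lam N0 s) has_real_derivative
     theta*N0*((rho + b1*(1-rho)*s)\<^sup>2 - 2*(theta*b1*rho)*(rho + b1*(1-rho)*s) + (theta*b1*rho)*rho)
        / (rho + b1*(1-rho)*s - theta*b1*rho)\<^sup>2
     - b1*(1-rho)*lam*rho/(rho + b1*(1-rho)*s)\<^sup>2) (at s)"
proof -
  define a where "a = b1*(1-rho)"
  define c where "c = theta*b1*rho"
  define d where "d = rho + a*s"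
  have dc: "c < d" using ds by (simp add: c_def d_def a_def)
  have d0: "0 < d" using dc c_pos c_def by simp
  have f1: "((\<lambda>s. s*(rho+a*s)) has_real_derivative rho + 2*a*s) (at s)"
    by (auto intro!: derivative_eq_intros simp: algebra_simps)
  have g1: "((\<lambda>s. rho+a*s-c) has_real_derivative a) (at s)"
    by (auto intro!: derivative_eq_intros)
  have g1n: "rho+a*s-c \<noteq> 0" using dc d_def by simp
  note q1 = DERIV_quotient[OF f1 g1 g1n]
  have h1: "((\<lambda>s. lam*rho) has_real_derivative 0) (at s)" by simp
  have h2: "((\<lambda>s. rho+a*s) has_real_derivative a) (at s)"
    by (auto intro!: derivative_eq_intros)
  have h2n: "rho+a*s \<noteq> 0" using d0 d_def by simp
  note q2 = DERIV_quotient[OF h1 h2 h2n]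
  have G: "((\<lambda>s. theta*N0*(s*(rho+a*s)/(rho+a*s-c)) + lam*rho/(rho+a*s)) has_real_derivative
       theta*N0*(((rho + 2*a*s) * (rho+a*s-c) - a * (s*(rho+a*s))) / (rho+a*s-c) ^ Suc (Suc 0))
       + (0 * (rho+a*s) - a*(lam*rho)) / (rho+a*s) ^ Suc (Suc 0)) (at s)"
    by (intro DERIV_add DERIV_cmult q1 q2)
  have val: "theta*N0*(((rho + 2*a*s) * (rho+a*s-c) - a * (s*(rho+a*s))) / (rho+a*s-c) ^ Suc (Suc 0))
       + (0 * (rho+a*s) - a*(lam*rho)) / (rho+a*s) ^ Suc (Suc 0)
     = theta*N0*((rho + b1*(1-rho)*s)\<^sup>2 - 2*(theta*b1*rho)*(rho + b1*(1-rho)*s) + (theta*b1*rho)*rho)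
        / (rho + b1*(1-rho)*s - theta*b1*rho)\<^sup>2
     - b1*(1-rho)*lam*rho/(rho + b1*(1-rho)*s)\<^sup>2"
  proof -
    have "(rho + 2*a*s) * (rho+a*s-c) - a * (s*(rho+a*s)) = (rho+a*s)\<^sup>2 - 2*c*(rho+a*s) + c*rho"
      by (simp add: algebra_simps power2_eq_square)
    thus ?thesis by (simp add: a_def c_def power2_eq_square mult.assoc)
  qed
  have G2: "((\<lambda>s. theta*N0*(s*(rho+a*s)/(rho+a*s-c)) + lam*rho/(rho+a*s)) has_real_derivative
     theta*N0*((rho + b1*(1-rho)*s)\<^sup>2 - 2*(theta*b1*rho)*(rho + b1*(1-rho)*s) + (theta*b1*rho)*rho)
        / (rho + b1*(1-rho)*s - theta*b1*rho)\<^sup>2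
     - b1*(1-rho)*lam*rho/(rho + b1*(1-rho)*s)\<^sup>2) (at s)"
    using G unfolding val .
  show ?thesis
  proof (rule has_field_derivative_transform_within_open[OF G2, of "{y. c < rho + a*y}"])
    show "open {y. c < rho + a*y}" by (intro open_Collect_less continuous_intros)
    show "s \<in> {y. c < rho + a*y}" using dc d_def by simp
    fix y assume "y \<in> {y. c < rho + a*y}"
    hence yc: "c < rho + a*y" by simp
    have y0: "0 < rho + a*y" using yc c_pos c_def by simp
    have ne: "1 - theta*(b1*rho/(rho + a*y)) = (rho + a*y - c)/(rho + a*y)"
      using y0 by (simp add: c_def field_simps)
    have ne2: "rho + a*y - c \<noteq> 0" using yc by simp
    have den: "denom b1 rho y = rho + a*y" by (simp add: denom_def a_def algebra_simps)
    have m24: "mbar2 b1 rho y + mbar4 b1 rho y = rho/(rho+a*y)"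
      unfolding mbar2_def mbar4_def den by (simp add: add_divide_distrib[symmetric] algebra_simps)
    have m4: "1 - theta * mbar4 b1 rho y = (rho + a*y - c)/(rho + a*y)"
      unfolding mbar4_def den using ne .
    have t1: "theta*N0*y / ((rho + a*y - c)/(rho + a*y)) = theta*N0*(y*(rho+a*y)/(rho+a*y-c))"
      using ne2 y0 by (simp add: field_simps)
    show "theta*N0*(y*(rho+a*y)/(rho+a*y-c)) + lam*rho/(rho+a*y) = Ecost b1 rho theta lam N0 y"
      unfolding Ecost_def m24 m4 t1 by simp
  qed
qed

lemma E_sign:
  assumes ds: "theta*b1*rho < d"
  shows "theta*N0*(d\<^sup>2 - 2*(theta*b1*rho)*d + (theta*b1*rho)*rho) / (d - theta*b1*rho)\<^sup>2
     - b1*(1-rho)*lam*rho/d\<^sup>2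
     = (theta*(d\<^sup>2 - 2*(theta*b1*rho)*d + (theta*b1*rho)*rho) / (d - theta*b1*rho)\<^sup>2)
        * (N0 - SS b1 rho theta lam d)"
  and "0 < theta*(d\<^sup>2 - 2*(theta*b1*rho)*d + (theta*b1*rho)*rho) / (d - theta*b1*rho)\<^sup>2"
proof -
  have d0: "0 < d" using ds c_pos by linarith
  have Q: "0 < d\<^sup>2 - 2*(theta*b1*rho)*d + (theta*b1*rho)*rho" by (rule Q_pos)
  have dc: "d - theta*b1*rho \<noteq> 0" using ds by simp
  show "0 < theta*(d\<^sup>2 - 2*(theta*b1*rho)*d + (theta*b1*rho)*rho) / (d - theta*b1*rho)\<^sup>2"
    using Q t0 dc by simp
  show "theta*N0*(d\<^sup>2 - 2*(theta*b1*rho)*d + (theta*b1*rho)*rho) / (d - theta*b1*rho)\<^sup>2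
     - b1*(1-rho)*lam*rho/d\<^sup>2
     = (theta*(d\<^sup>2 - 2*(theta*b1*rho)*d + (theta*b1*rho)*rho) / (d - theta*b1*rho)\<^sup>2)
        * (N0 - SS b1 rho theta lam d)"
  proof -
    define Qd where "Qd = d\<^sup>2 - 2*(theta*b1*rho)*d + (theta*b1*rho)*rho"
    define e where "e = d - theta*b1*rho"
    have Q': "Qd \<noteq> 0" using Q Qd_def by simp
    have e': "e \<noteq> 0" using dc e_def by simp
    have "theta*Qd/e\<^sup>2 * SS b1 rho theta lam d = b1*(1-rho)*lam*rho/d\<^sup>2"
      unfolding SS_def Qd_def[symmetric] e_def[symmetric] using Q' e' d0 t0
      by (simp add: power2_eq_square)
    thus ?thesis unfolding Qd_def[symmetric] e_def[symmetric]
      by (simp add: right_diff_distrib)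
  qed
qed


lemma SS_rho: "SS b1 rho theta lam rho = N0_0 b1 rho theta lam"
proof -
  have rc: "rho - theta*b1*rho \<noteq> 0" using c_lt by linarith
  have q: "rho\<^sup>2 - 2*(theta*b1*rho)*rho + (theta*b1*rho)*rho = rho*(rho - theta*b1*rho)"
    by (simp add: algebra_simps power2_eq_square)
  have e: "rho - theta*b1*rho = rho*(1 - theta*b1)" by (simp add: algebra_simps)
  show ?thesis unfolding SS_def N0_0_def q using rc r0 t0
    by (simp add: e power2_eq_square field_simps)
qed

lemma SS_one: "SS b1 rho theta lam (rho + b1*(1-rho)*1) = N0_1 b1 rho theta lam"
proof -
  define D where "D = rho + b1*(1-rho)"
  define c where "c = theta*b1*rho"
  define Q where "Q = D\<^sup>2 - 2*c*D + c*rho"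
  have D0: "0 < D" using b0 r0 r1 by (simp add: D_def add_pos_pos)
  have Q0: "0 < Q" using Q_pos[of D] by (simp add: Q_def c_def)
  have e1: "rho + b1 - b1*rho*(1+theta) = D - c" by (simp add: D_def c_def algebra_simps)
  have e2: "b1 + rho - b1*rho = D" by (simp add: D_def algebra_simps)
  have e3: "2*b1*(1-rho)*rho*(1-theta*b1) + rho\<^sup>2*(1-theta*b1) + b1\<^sup>2*(1-rho)\<^sup>2 = Q"
    by (simp add: Q_def D_def c_def algebra_simps power2_eq_square)
  have "SS b1 rho theta lam D = b1*(1-rho)*lam*rho*(D-c)\<^sup>2/(theta*D\<^sup>2*Q)"
    by (simp add: SS_def Q_def c_def)
  also have "\<dots> = N0_1 b1 rho theta lam"
    unfolding N0_1_def e1 e2 e3 using D0 Q0 t0 by (simp add: field_simps)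
  finally show ?thesis by (simp add: D_def)
qed

lemma SS_m:
  assumes s0: "0 \<le> s"
  shows "SS b1 rho theta lam (rho + b1*(1-rho)*s) =
    (let m4 = mbar4 b1 rho s in
       lam * (1 - rho) * m4\<^sup>2 * (1 - theta * m4)\<^sup>2 / (theta * rho * (theta * m4 * (m4 - 2 * b1) + b1)))"
proof -
  define d where "d = rho + b1*(1-rho)*s"
  define m where "m = b1*rho/d"
  define c where "c = theta*b1*rho"
  have d0: "0 < d" using r0 b0 r1 s0 by (simp add: d_def add_pos_nonneg)
  have m0: "0 < m" using b0 r0 d0 by (simp add: m_def)
  have mb: "mbar4 b1 rho s = m" by (simp add: mbar4_def denom_def m_def d_def algebra_simps)
  have dm: "d = b1*rho/m" using m0 d0 b0 r0 by (simp add: m_def field_simps)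
  have q0: "0 < theta*m*(m - 2*b1) + b1"
  proof -
    have "theta*m*(m - 2*b1) + b1 = theta*(m-b1)\<^sup>2 + b1*(1-theta*b1)"
      by (simp add: algebra_simps power2_eq_square)
    moreover have "0 < b1*(1-theta*b1)" using b0 tb1 by simp
    moreover have "0 \<le> theta*(m-b1)\<^sup>2" using t0 by simp
    ultimately show ?thesis by linarith
  qed
  have f1: "d - c = b1*rho*(1-theta*m)/m" unfolding dm c_def using m0 by (simp add: field_simps)
  have f2: "d\<^sup>2 = b1\<^sup>2*rho\<^sup>2/m\<^sup>2" unfolding dm by (simp add: power_divide power_mult_distrib)
  have f3: "d\<^sup>2 - 2*c*d + c*rho = rho\<^sup>2*b1*(theta*m*(m - 2*b1) + b1)/m\<^sup>2"
    unfolding dm c_def using m0 by (simp add: field_simps power2_eq_square)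
  have "SS b1 rho theta lam d = b1*(1-rho)*lam*rho*(d-c)\<^sup>2/(theta*d\<^sup>2*(d\<^sup>2 - 2*c*d + c*rho))"
    by (simp add: SS_def c_def)
  also have "\<dots> = lam * (1 - rho) * m\<^sup>2 * (1 - theta * m)\<^sup>2 / (theta * rho * (theta * m * (m - 2 * b1) + b1))"
  proof -
    define q where "q = theta * m * (m - 2 * b1) + b1"
    have qn: "q \<noteq> 0" using q0 q_def by simp
    have "b1*(1-rho)*lam*rho*(b1*rho*(1-theta*m)/m)\<^sup>2/(theta*(b1\<^sup>2*rho\<^sup>2/m\<^sup>2)*(rho\<^sup>2*b1*q/m\<^sup>2))
       = lam * (1 - rho) * m\<^sup>2 * (1 - theta * m)\<^sup>2 / (theta * rho * q)"
      using m0 qn b0 r0 t0 by (simp add: field_simps power2_eq_square)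
    thus ?thesis unfolding f3 unfolding f2 f1 q_def .
  qed
  finally show ?thesis by (simp add: d_def mb Let_def)
qed


lemma main:
  assumes N0p: "0 < N0"
    and NH: "N0 \<le> lam * (1 - rho) * (1 - b1 * theta)\<^sup>2 / (rho * theta\<^sup>2)"
    and s4_range: "s4 \<in> {0..1}"
    and s4_min: "\<forall>s\<in>{0..1}. Ecost b1 rho theta lam N0 s4 \<le> Ecost b1 rho theta lam N0 s"
  shows "(N0 \<ge> N0_0 b1 rho theta lam \<longrightarrow>
            s4 = 0 \<and>
            (mbar1 b1 rho s4, mbar2 b1 rho s4, mbar3 b1 rho s4, mbar4 b1 rho s4) = (0, 1 - b1, 0, b1))
       \<and> (N0 \<le> N0_1 b1 rho theta lam \<longrightarrow>
            s4 = 1 \<and>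
            mbar1 b1 rho s4 = (1 - b1) * b1 * (1 - rho) / (b1 * (1 - rho) + rho) \<and>
            mbar2 b1 rho s4 = (1 - b1) * rho / (rho + b1 * (1 - rho)) \<and>
            mbar3 b1 rho s4 = b1\<^sup>2 * (1 - rho) / (rho + b1 * (1 - rho)) \<and>
            mbar4 b1 rho s4 = b1 * rho / (rho + b1 * (1 - rho)))
       \<and> (N0_1 b1 rho theta lam < N0 \<and> N0 < N0_0 b1 rho theta lam \<longrightarrow>
            0 < s4 \<and> s4 < 1 \<and>
            (let m4 = mbar4 b1 rho s4 in
              N0 = lam * (1 - rho) * m4\<^sup>2 * (1 - theta * m4)\<^sup>2
                   / (theta * rho * (theta * m4 * (m4 - 2 * b1) + b1))))"
proof -
  define D where "D = (\<lambda>s::real. rho + b1*(1-rho)*s)"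
  define E where "E = (\<lambda>s. Ecost b1 rho theta lam N0 s)"
  define S where "S = (\<lambda>s. SS b1 rho theta lam (D s))"
  define PF where "PF = (\<lambda>s. theta*((D s)\<^sup>2 - 2*(theta*b1*rho)*(D s) + (theta*b1*rho)*rho) / (D s - theta*b1*rho)\<^sup>2)"
  define E' where "E' = (\<lambda>s. PF s * (N0 - S s))"
  have a0: "0 < b1*(1-rho)" using b0 r1 by simp
  have Dge: "rho \<le> D s" if "0 \<le> s" for s using a0 that by (simp add: D_def)
  have Dc: "theta*b1*rho < D s" if "0 \<le> s" for s using Dge[OF that] c_lt by linarith
  have Dmono: "D s0 < D s1" if "s0 < s1" for s0 s1 using a0 that by (simp add: D_def mult_strict_left_mono)
  have PF0: "0 < PF s" if "0 \<le> s" for s using E_sign(2)[OF Dc[OF that]] by (simp add: PF_def)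
  have dE: "(E has_real_derivative E' s) (at s)" if "0 \<le> s" for s
  proof -
    have "theta*N0*((rho + b1*(1-rho)*s)\<^sup>2 - 2*(theta*b1*rho)*(rho + b1*(1-rho)*s) + (theta*b1*rho)*rho)
        / (rho + b1*(1-rho)*s - theta*b1*rho)\<^sup>2
     - b1*(1-rho)*lam*rho/(rho + b1*(1-rho)*s)\<^sup>2 = E' s"
      using E_sign(1)[OF Dc[OF that]] unfolding E'_def PF_def S_def D_def by simp
    thus ?thesis using E_deriv[of s N0] Dc[OF that] unfolding E_def D_def by simp
  qed
  have H: "N0 \<le> lam*(1-rho)*(1-b1*theta)\<^sup>2/(rho*theta\<^sup>2)" using NH by simp
  have C: "S s1 < N0" if "0 \<le> s0" "s0 < s1" "S s0 \<le> N0" for s0 s1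
  proof -
    have "S s1 < S s0" unfolding S_def
      by (rule SS_mono[OF Dge[OF that(1)] Dmono[OF that(2)]]) (use that H S_def in simp)
    thus ?thesis using that(3) by simp
  qed
  have S0: "S 0 = N0_0 b1 rho theta lam" using SS_rho by (simp add: S_def D_def)
  have S1: "S 1 = N0_1 b1 rho theta lam" using SS_one by (simp add: S_def D_def)
  have s40: "0 \<le> s4" and s41: "s4 \<le> 1" using s4_range by auto
  have Emin: "E s4 \<le> E s" if "0 \<le> s" "s \<le> 1" for s using s4_min that by (simp add: E_def)
  have P1: "s4 = 0" if "N0 \<ge> N0_0 b1 rho theta lam"
  proof (rule ccontr)
    assume "s4 \<noteq> 0" hence sp: "0 < s4" using s40 by simp
    obtain z where z: "0 < z" "z < s4" and eq: "E s4 - E 0 = (s4 - 0) * E' z"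
      using MVT2[OF sp, of E E'] dE by auto
    have "S z < N0" using C[of 0 z] z that S0 by simp
    hence "0 < E' z" using PF0[of z] z by (simp add: E'_def)
    hence "E 0 < E s4" using eq sp by (simp add: algebra_simps)
    thus False using Emin[of 0] by simp
  qed
  have P2: "s4 = 1" if "N0 \<le> N0_1 b1 rho theta lam"
  proof (rule ccontr)
    assume "s4 \<noteq> 1" hence sp: "s4 < 1" using s41 by simp
    obtain z where z: "s4 < z" "z < 1" and eq: "E 1 - E s4 = (1 - s4) * E' z"
      using MVT2[OF sp, of E E'] dE s40 by auto
    have "\<not> S z \<le> N0"
    proof
      assume "S z \<le> N0"
      hence "S 1 < N0" using C[of z 1] z s40 by simp
      thus False using that S1 by simp
    qed
    hence "E' z < 0" using PF0[of z] z s40 by (simp add: E'_def mult_pos_neg)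
    hence "(1 - s4) * E' z < 0" using sp by (simp add: mult_pos_neg)
    hence "E 1 < E s4" using eq by simp
    thus False using Emin[of 1] by simp
  qed
  have P3: "0 < s4 \<and> s4 < 1 \<and> N0 = S s4"
    if lo: "N0_1 b1 rho theta lam < N0" and hi: "N0 < N0_0 b1 rho theta lam"
  proof -
    have n0: "s4 \<noteq> 0"
    proof
      assume s4z: "s4 = 0"
      have "E' 0 < 0" using PF0[of 0] hi S0 by (simp add: E'_def mult_pos_neg)
      then obtain dl where dl: "0 < dl" "\<forall>h>0. h < dl \<longrightarrow> E (0 + h) < E 0"
        using DERIV_neg_dec_right[OF dE[of 0]] by auto
      define h where "h = min (dl/2) 1"
      have "E h < E 0" using dl unfolding h_def by simp
      moreover have "E 0 \<le> E h" using Emin[of h] s4z dl by (simp add: h_def)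
      ultimately show False by simp
    qed
    have n1: "s4 \<noteq> 1"
    proof
      assume s4z: "s4 = 1"
      have "0 < E' 1" using PF0[of 1] lo S1 by (simp add: E'_def)
      then obtain dl where dl: "0 < dl" "\<forall>h>0. h < dl \<longrightarrow> E (1 - h) < E 1"
        using DERIV_pos_inc_left[OF dE[of 1]] by auto
      define h where "h = min (dl/2) 1"
      have "E (1 - h) < E 1" using dl unfolding h_def by simp
      moreover have "E 1 \<le> E (1 - h)" using Emin[of "1-h"] s4z dl by (simp add: h_def)
      ultimately show False by simp
    qed
    have in0: "0 < s4" "s4 < 1" using n0 n1 s40 s41 by auto
    have "E' s4 = 0"
    proof (rule DERIV_local_min[OF dE[OF s40], of "min s4 (1 - s4)"])
      show "0 < min s4 (1 - s4)" using in0 by simp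
      show "\<forall>y. \<bar>s4 - y\<bar> < min s4 (1 - s4) \<longrightarrow> E s4 \<le> E y"
        using Emin by (auto simp: abs_if split: if_splits)
    qed
    hence "N0 = S s4" using PF0[OF s40] by (simp add: E'_def)
    thus ?thesis using in0 by simp
  qed
  show ?thesis
  proof (intro conjI impI)
    assume h: "N0 \<ge> N0_0 b1 rho theta lam"
    show "s4 = 0" using P1[OF h] .
    show "(mbar1 b1 rho s4, mbar2 b1 rho s4, mbar3 b1 rho s4, mbar4 b1 rho s4) = (0, 1 - b1, 0, b1)"
      using P1[OF h] r0 by (simp add: mbar1_def mbar2_def mbar3_def mbar4_def denom_def)
  next
    assume h: "N0 \<le> N0_1 b1 rho theta lam"
    have den: "denom b1 rho s4 = rho + b1 * (1 - rho)" using P2[OF h] by (simp add: denom_def)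
    show "s4 = 1" using P2[OF h] .
    show "mbar1 b1 rho s4 = (1 - b1) * b1 * (1 - rho) / (b1 * (1 - rho) + rho)"
      unfolding mbar1_def den using P2[OF h] by (simp add: add.commute)
    show "mbar2 b1 rho s4 = (1 - b1) * rho / (rho + b1 * (1 - rho))"
      by (simp add: mbar2_def den)
    show "mbar3 b1 rho s4 = b1\<^sup>2 * (1 - rho) / (rho + b1 * (1 - rho))"
      unfolding mbar3_def den using P2[OF h] by simp
    show "mbar4 b1 rho s4 = b1 * rho / (rho + b1 * (1 - rho))"
      by (simp add: mbar4_def den)
  next
    assume h: "N0_1 b1 rho theta lam < N0 \<and> N0 < N0_0 b1 rho theta lam"
    have P: "0 < s4 \<and> s4 < 1 \<and> N0 = S s4" using P3 h by blast
    show "0 < s4" "s4 < 1" using P by auto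
    show "let m4 = mbar4 b1 rho s4 in
              N0 = lam * (1 - rho) * m4\<^sup>2 * (1 - theta * m4)\<^sup>2
                   / (theta * rho * (theta * m4 * (m4 - 2 * b1) + b1))"
      using P SS_m[OF s40] by (simp add: S_def D_def Let_def)
  qed
qed

end

theorem proposition4:
  fixes b1 rho theta lam N0 s4 :: real
  assumes "0 < b1" "b1 < 1"
    and "0 < rho" "rho < 1"
    and "0 < theta" "theta < 1"
    and "0 \<le> lam" and "0 < N0"
    and "N0 \<le> lam * (1 - rho) * (1 - b1 * theta)\<^sup>2 / (rho * theta\<^sup>2)"
    and s4_range: "s4 \<in> {0..1}"
    and s4_min: "\<forall>s\<in>{0..1}. Ecost b1 rho theta lam N0 s4 \<le> Ecost b1 rho theta lam N0 s"
  shows "(N0 \<ge> N0_0 b1 rho theta lam \<longrightarrow>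
            s4 = 0 \<and>
            (mbar1 b1 rho s4, mbar2 b1 rho s4, mbar3 b1 rho s4, mbar4 b1 rho s4) = (0, 1 - b1, 0, b1))
       \<and> (N0 \<le> N0_1 b1 rho theta lam \<longrightarrow>
            s4 = 1 \<and>
            mbar1 b1 rho s4 = (1 - b1) * b1 * (1 - rho) / (b1 * (1 - rho) + rho) \<and>
            mbar2 b1 rho s4 = (1 - b1) * rho / (rho + b1 * (1 - rho)) \<and>
            mbar3 b1 rho s4 = b1\<^sup>2 * (1 - rho) / (rho + b1 * (1 - rho)) \<and>
            mbar4 b1 rho s4 = b1 * rho / (rho + b1 * (1 - rho)))
       \<and> (N0_1 b1 rho theta lam < N0 \<and> N0 < N0_0 b1 rho theta lam \<longrightarrow>
            0 < s4 \<and> s4 < 1 \<and>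
            (let m4 = mbar4 b1 rho s4 in
              N0 = lam * (1 - rho) * m4\<^sup>2 * (1 - theta * m4)\<^sup>2
                   / (theta * rho * (theta * m4 * (m4 - 2 * b1) + b1))))"
proof -
  have lam0: "0 < lam"
  proof (rule ccontr)
    assume "\<not> 0 < lam" hence "lam = 0" using assms(7) by simp
    thus False using assms(8,9) by simp
  qed
  show ?thesis
    by (rule main[OF assms(1-6) lam0 assms(8,9) s4_range s4_min])
qed

end
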